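(* Let $A\in\mathbb{R}^{m\times n}_+$ with every row containing a positive entry, $r\in\mathbb{R}^m_{+}$, $c\in\mathbb{R}^n_+$, $y\in\mathbb{R}^n_{++}$, let $T\subseteq[n]$ have margin $\gamma$, and let $h:=h^{A,r,y}_T$. Then for any $\alpha$ satisfying $0\le h(\alpha)-h(1)\le\gamma$, the scaling $y':=y\circ(1_{\bar T}+\alpha1_T)$ satisfies \[\|c^{A,r}(y)-c\|_2^2-\|c^{A,r}(y')-c\|_2^2\ge2\gamma(h(\alpha)-h(1)).\]
   Context: $c^{A,r}_j(y):=\sum_{i\in[m]}r_i\frac{A_{ij}y_j}{\sum_{k\in[n]}A_{ik}y_k}$. $\bar T=[n]\setminus T$, $1_T$ the indicator of $T$, $\circ$ the entrywise product. Margin of $T$: the largest $\gamma\ge0$ such that some $\nu\in\mathbb{R}$ satisfies $\max_{j\in T}(c^{A,r}_j(y)-c_j)\le\nu-\gamma\le\nu+\gamma\le\min_{j\notin T}(c^{A,r}_j(y)-c_j)$. Proxy function: $h^{A,r,y}_T(\alpha):=\sum_{j\in T}c^{A,r}_j(y\circ(1_{\bar T}+\alpha1_T))$, $\alpha>0$. *)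

theory Defs
  imports "HOL-Analysis.Analysis"
begin

text \<open>Matrices A in R^{m x n} are functions nat => nat => real (entries A i j, i < m, j < n);
vectors are functions nat => real restricted to the index range. Indices are 0-based:
[m] = {..<m}, [n] = {..<n}.\<close>

definition cAr :: "nat \<Rightarrow> nat \<Rightarrow> (nat \<Rightarrow> nat \<Rightarrow> real) \<Rightarrow> (nat \<Rightarrow> real) \<Rightarrow> (nat \<Rightarrow> real) \<Rightarrow> nat \<Rightarrow> real" where
  "cAr m n A r y j = (\<Sum>i<m. r i * (A i j * y j) / (\<Sum>k<n. A i k * y k))"

definition margin_feasible :: "nat \<Rightarrow> nat \<Rightarrow> (nat \<Rightarrow> nat \<Rightarrow> real) \<Rightarrow> (nat \<Rightarrow> real) \<Rightarrow> (nat \<Rightarrow> real)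
    \<Rightarrow> (nat \<Rightarrow> real) \<Rightarrow> nat set \<Rightarrow> real \<Rightarrow> bool" where
  "margin_feasible m n A r c y T \<gamma> \<longleftrightarrow> \<gamma> \<ge> 0 \<and>
     (\<exists>\<nu>::real. (\<forall>j\<in>T. cAr m n A r y j - c j \<le> \<nu> - \<gamma>) \<and>
                (\<forall>j\<in>{..<n} - T. \<nu> + \<gamma> \<le> cAr m n A r y j - c j))"

definition is_margin :: "nat \<Rightarrow> nat \<Rightarrow> (nat \<Rightarrow> nat \<Rightarrow> real) \<Rightarrow> (nat \<Rightarrow> real) \<Rightarrow> (nat \<Rightarrow> real)
    \<Rightarrow> (nat \<Rightarrow> real) \<Rightarrow> nat set \<Rightarrow> real \<Rightarrow> bool" where
  "is_margin m n A r c y T \<gamma> \<longleftrightarrow> margin_feasible m n A r c y T \<gamma> \<and>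
     (\<forall>\<gamma>'. margin_feasible m n A r c y T \<gamma>' \<longrightarrow> \<gamma>' \<le> \<gamma>)"

definition scaleT :: "nat set \<Rightarrow> real \<Rightarrow> (nat \<Rightarrow> real) \<Rightarrow> nat \<Rightarrow> real" where
  "scaleT T \<alpha> y j = y j * (if j \<in> T then \<alpha> else 1)"

definition proxy_h :: "nat \<Rightarrow> nat \<Rightarrow> (nat \<Rightarrow> nat \<Rightarrow> real) \<Rightarrow> (nat \<Rightarrow> real) \<Rightarrow> (nat \<Rightarrow> real)
    \<Rightarrow> nat set \<Rightarrow> real \<Rightarrow> real" where
  "proxy_h m n A r y T \<alpha> = (\<Sum>j\<in>T. cAr m n A r (scaleT T \<alpha> y) j)"

end

theory Submission
  imports Defs
begin

lemma alg:
  fixes x d :: "nat \<Rightarrow> real"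
  assumes T: "T \<subseteq> {..<n}"
    and dT: "\<forall>j\<in>T. d j \<ge> 0" and dN: "\<forall>j\<in>{..<n}-T. d j \<le> 0"
    and sT: "sum d T = \<delta>" and sN: "sum d ({..<n}-T) = -\<delta>"
    and xT: "\<forall>j\<in>T. x j \<le> \<nu> - \<gamma>" and xN: "\<forall>j\<in>{..<n}-T. \<nu> + \<gamma> \<le> x j"
    and d0: "0 \<le> \<delta>" and dg: "\<delta> \<le> \<gamma>"
  shows "(\<Sum>j<n. (x j)^2) - (\<Sum>j<n. (x j + d j)^2) \<ge> 2 * \<gamma> * \<delta>"
proof -
  let ?N = "{..<n}-T"
  have fT: "finite T" using T finite_subset by blast
  have split: "\<And>f. sum f {..<n} = sum f T + sum f ?N"
    using T by (metis finite_lessThan sum.subset_diff add.commute)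
  have e: "(\<Sum>j<n. (x j)^2) - (\<Sum>j<n. (x j + d j)^2) = (\<Sum>j<n. - 2 * (x j * d j) - (d j)^2)"
    unfolding sum_subtractf[symmetric] by (rule sum.cong) (auto simp: power2_eq_square algebra_simps)
  have a1: "(\<Sum>j\<in>T. x j * d j) \<le> (\<Sum>j\<in>T. (\<nu> - \<gamma>) * d j)"
    by (rule sum_mono) (use xT dT in \<open>simp add: mult_right_mono\<close>)
  have a2: "(\<Sum>j\<in>?N. x j * d j) \<le> (\<Sum>j\<in>?N. (\<nu> + \<gamma>) * d j)"
    by (rule sum_mono) (use xN dN in \<open>simp add: mult_right_mono_neg\<close>)
  have b1: "(\<Sum>j\<in>T. (d j)^2) \<le> (\<Sum>j\<in>T. \<delta> * d j)"
  proof (rule sum_mono)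
    fix j assume j: "j \<in> T"
    have "d j \<le> \<delta>" using member_le_sum[of j T d] j dT fT sT by auto
    thus "(d j)^2 \<le> \<delta> * d j" using dT j by (simp add: power2_eq_square mult_right_mono)
  qed
  have b2: "(\<Sum>j\<in>?N. (d j)^2) \<le> (\<Sum>j\<in>?N. - \<delta> * d j)"
  proof (rule sum_mono)
    fix j assume j: "j \<in> ?N"
    have "- d j \<le> \<delta>" using member_le_sum[of j ?N "\<lambda>j. - d j"] j dN sN
      by (auto simp: sum_negf)
    thus "(d j)^2 \<le> - \<delta> * d j" using dN j
      using mult_right_mono[of "- d j" \<delta> "- d j"] by (simp add: power2_eq_square)
  qed
  have "(\<Sum>j<n. - 2 * (x j * d j) - (d j)^2)
      = - 2 * (\<Sum>j\<in>T. x j * d j) - 2 * (\<Sum>j\<in>?N. x j * d j) - (\<Sum>j\<in>T. (d j)^2) - (\<Sum>j\<in>?N. (d j)^2)"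
    unfolding split[of "\<lambda>j. - 2 * (x j * d j) - (d j)^2"] sum_subtractf sum_negf sum_distrib_left[symmetric]
    using split[of "\<lambda>j. x j * d j"] split[of "\<lambda>j. (d j)^2"] by simp
  moreover have "(\<Sum>j\<in>T. (\<nu> - \<gamma>) * d j) = (\<nu> - \<gamma>) * \<delta>" using sT by (simp add: sum_distrib_left[symmetric])
  moreover have "(\<Sum>j\<in>?N. (\<nu> + \<gamma>) * d j) = - (\<nu> + \<gamma>) * \<delta>" using sN by (simp add: sum_distrib_left[symmetric] del: minus_add_distrib)
  moreover have "(\<Sum>j\<in>T. \<delta> * d j) = \<delta> * \<delta>" using sT by (simp add: sum_distrib_left[symmetric])
  moreover have "(\<Sum>j\<in>?N. - \<delta> * d j) = \<delta> * \<delta>" using sN by (simp add: sum_distrib_left[symmetric] sum_negf)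
  moreover have "4 * \<gamma> * \<delta> - 2 * \<delta> * \<delta> = -2*((\<nu> - \<gamma>) * \<delta>) - 2*(- (\<nu> + \<gamma>) * \<delta>) - \<delta> * \<delta> - \<delta> * \<delta>"
    by (simp add: algebra_simps)
  ultimately have "(\<Sum>j<n. - 2 * (x j * d j) - (d j)^2) \<ge> 4 * \<gamma> * \<delta> - 2 * \<delta> * \<delta>"
    using a1 a2 b1 b2
      \<open>4 * \<gamma> * \<delta> - 2 * \<delta> * \<delta> = -2*((\<nu> - \<gamma>) * \<delta>) - 2*(- (\<nu> + \<gamma>) * \<delta>) - \<delta> * \<delta> - \<delta> * \<delta>\<close>
    by linarith
  moreover have "4 * \<gamma> * \<delta> - 2 * \<delta> * \<delta> \<ge> 2 * \<gamma> * \<delta>"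
    using d0 dg mult_right_mono[OF dg d0] by (simp add: algebra_simps)
  ultimately show ?thesis using e by linarith
qed


lemma rowpos:
  fixes A :: "nat \<Rightarrow> nat \<Rightarrow> real" and z :: "nat \<Rightarrow> real"
  assumes A_nonneg: "\<forall>i<m. \<forall>j<n. A i j \<ge> 0"
    and A_rows: "\<forall>i<m. \<exists>j<n. A i j > 0"
    and z: "\<forall>j<n. z j > 0" and i: "i < m"
  shows "(\<Sum>k<n. A i k * z k) > 0"
proof -
  obtain j where j: "j < n" "A i j > 0" using A_rows i by blast
  have "A i j * z j \<le> (\<Sum>k<n. A i k * z k)"
    using member_le_sum[of j "{..<n}" "\<lambda>k. A i k * z k"] A_nonneg z i j
    by (simp add: less_imp_le)
  moreover have "A i j * z j > 0" using j z by auto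
  ultimately show ?thesis by linarith
qed

lemma total:
  assumes A_nonneg: "\<forall>i<m. \<forall>j<n. A i j \<ge> 0"
    and A_rows: "\<forall>i<m. \<exists>j<n. A i j > 0"
    and z: "\<forall>j<n. z j > 0"
  shows "(\<Sum>j<n. cAr m n A r z j) = (\<Sum>i<m. r i)"
proof -
  have "(\<Sum>j<n. cAr m n A r z j) = (\<Sum>i<m. \<Sum>j<n. r i * (A i j * z j) / (\<Sum>k<n. A i k * z k))"
    unfolding cAr_def by (rule sum.swap)
  also have "\<dots> = (\<Sum>i<m. r i)"
  proof (rule sum.cong)
    fix i assume "i \<in> {..<m}"
    then have p: "(\<Sum>k<n. A i k * z k) > 0" using rowpos[OF A_nonneg A_rows z] by auto
    have "(\<Sum>j<n. r i * (A i j * z j) / (\<Sum>k<n. A i k * z k))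
        = r i * (\<Sum>j<n. A i j * z j) / (\<Sum>k<n. A i k * z k)"
      by (simp add: sum_divide_distrib[symmetric] sum_distrib_left[symmetric])
    also have "\<dots> = r i" using p by simp
    finally show "(\<Sum>j<n. r i * (A i j * z j) / (\<Sum>k<n. A i k * z k)) = r i" .
  qed simp
  finally show ?thesis .
qed

lemma le_scale1: "(0::real) \<le> b \<Longrightarrow> 1 \<le> \<alpha> \<Longrightarrow> b \<le> \<alpha> * b"
  using mult_right_mono[of 1 \<alpha> b] by simp

lemma le_scale2: "(0::real) \<le> b \<Longrightarrow> \<alpha> \<le> 1 \<Longrightarrow> \<alpha> * b \<le> b"
  using mult_right_mono[of \<alpha> 1 b] by simp

lemma termdiff:
  fixes S S' r A y t :: real
  assumes "S > 0" "S' > 0"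
  shows "r * (A * (y * t)) / S' - r * (A * y) / S = r * A * y * (t * S - S') / (S' * S)"
  using assms by (simp add: field_simps)

lemma signs:
  assumes A_nonneg: "\<forall>i<m. \<forall>j<n. A i j \<ge> 0"
    and A_rows: "\<forall>i<m. \<exists>j<n. A i j > 0"
    and r_nonneg: "\<forall>i<m. r i \<ge> 0"
    and y_pos: "\<forall>j<n. y j > 0"
    and a: "\<alpha> > 0" and j: "j < n"
  shows "(\<alpha> \<ge> 1 \<and> j \<in> T \<longrightarrow> cAr m n A r (scaleT T \<alpha> y) j \<ge> cAr m n A r y j)
       \<and> (\<alpha> \<ge> 1 \<and> j \<notin> T \<longrightarrow> cAr m n A r (scaleT T \<alpha> y) j \<le> cAr m n A r y j)
       \<and> (\<alpha> \<le> 1 \<and> j \<in> T \<longrightarrow> cAr m n A r (scaleT T \<alpha> y) j \<le> cAr m n A r y j)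
       \<and> (\<alpha> \<le> 1 \<and> j \<notin> T \<longrightarrow> cAr m n A r (scaleT T \<alpha> y) j \<ge> cAr m n A r y j)"
proof -
  let ?y' = "scaleT T \<alpha> y"
  let ?t = "if j \<in> T then \<alpha> else 1"
  have yp': "\<forall>j<n. ?y' j > 0" using y_pos a by (simp add: scaleT_def)
  define S where "S i = (\<Sum>k<n. A i k * y k)" for i
  define S' where "S' i = (\<Sum>k<n. A i k * ?y' k)" for i
  have Sp: "\<And>i. i < m \<Longrightarrow> S i > 0" unfolding S_def using rowpos[OF A_nonneg A_rows y_pos] by auto
  have Sp': "\<And>i. i < m \<Longrightarrow> S' i > 0" unfolding S'_def using rowpos[OF A_nonneg A_rows yp'] by auto
  have D: "cAr m n A r ?y' j - cAr m n A r y j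
     = (\<Sum>i<m. r i * A i j * y j * (?t * S i - S' i) / (S' i * S i))"
    unfolding cAr_def sum_subtractf[symmetric] S_def[symmetric] S'_def[symmetric]
  proof (rule sum.cong)
    fix i assume "i \<in> {..<m}"
    then show "r i * (A i j * ?y' j) / S' i - r i * (A i j * y j) / S i
       = r i * A i j * y j * (?t * S i - S' i) / (S' i * S i)"
      using termdiff[OF Sp Sp', of i i "r i" "A i j" "y j" ?t] by (simp add: scaleT_def)
  qed simp
  have c1: "\<alpha> \<ge> 1 \<Longrightarrow> S i \<le> S' i \<and> S' i \<le> \<alpha> * S i" if "i < m" for i
  proof -
    assume a1: "\<alpha> \<ge> 1"
    have "S i \<le> S' i" unfolding S_def S'_def
      by (rule sum_mono) (use A_nonneg y_pos a1 that in \<open>auto simp: scaleT_def intro!: mult_left_mono le_scale1 le_scale2\<close>)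
    moreover have "S' i \<le> \<alpha> * S i" unfolding S_def S'_def sum_distrib_left
      by (rule sum_mono) (use A_nonneg y_pos a1 that in \<open>auto simp: scaleT_def intro!: mult_left_mono le_scale1 le_scale2\<close>)
    ultimately show ?thesis by simp
  qed
  have c2: "\<alpha> \<le> 1 \<Longrightarrow> S' i \<le> S i \<and> \<alpha> * S i \<le> S' i" if "i < m" for i
  proof -
    assume a1: "\<alpha> \<le> 1"
    have "S' i \<le> S i" unfolding S_def S'_def
      by (rule sum_mono) (use A_nonneg y_pos a1 that in \<open>auto simp: scaleT_def intro!: mult_left_mono le_scale1 le_scale2\<close>)
    moreover have "\<alpha> * S i \<le> S' i" unfolding S_def S'_def sum_distrib_left
      by (rule sum_mono) (use A_nonneg y_pos a1 that in \<open>auto simp: scaleT_def intro!: mult_left_mono le_scale1 le_scale2\<close>)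
    ultimately show ?thesis by simp
  qed
  have nn: "\<And>i. i < m \<Longrightarrow> r i * A i j * y j \<ge> 0" using r_nonneg A_nonneg y_pos j by auto
  have dp: "\<And>i. i < m \<Longrightarrow> S' i * S i > 0" using Sp Sp' by auto
  have P: "cAr m n A r ?y' j - cAr m n A r y j \<ge> 0" if "\<And>i. i < m \<Longrightarrow> ?t * S i - S' i \<ge> 0"
    unfolding D
  proof (rule sum_nonneg)
    fix i assume "i \<in> {..<m}"
    then have i: "i < m" by simp
    show "0 \<le> r i * A i j * y j * (?t * S i - S' i) / (S' i * S i)"
      using divide_nonneg_pos[OF mult_nonneg_nonneg[OF nn[OF i] that[OF i]] dp[OF i]] by simp
  qed
  have N: "cAr m n A r ?y' j - cAr m n A r y j \<le> 0" if "\<And>i. i < m \<Longrightarrow> ?t * S i - S' i \<le> 0"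
    unfolding D
  proof (rule sum_nonpos)
    fix i assume "i \<in> {..<m}"
    then have i: "i < m" by simp
    show "r i * A i j * y j * (?t * S i - S' i) / (S' i * S i) \<le> 0"
      using divide_nonpos_pos[OF mult_nonneg_nonpos[OF nn[OF i] that[OF i]] dp[OF i]] by simp
  qed
  show ?thesis
  proof (intro conjI impI)
    assume "1 \<le> \<alpha> \<and> j \<in> T" then show "cAr m n A r ?y' j \<ge> cAr m n A r y j"
      using P c1 by force
  next
    assume "1 \<le> \<alpha> \<and> j \<notin> T" then show "cAr m n A r ?y' j \<le> cAr m n A r y j"
      using N c1 by force
  next
    assume "\<alpha> \<le> 1 \<and> j \<in> T" then show "cAr m n A r ?y' j \<le> cAr m n A r y j"
      using N c2 by force
  next
    assume "\<alpha> \<le> 1 \<and> j \<notin> T" then show "cAr m n A r ?y' j \<ge> cAr m n A r y j"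
      using P c2 by force
  qed
qed

theorem lemma6p7:
  fixes m n :: nat and A :: "nat \<Rightarrow> nat \<Rightarrow> real" and r c y :: "nat \<Rightarrow> real"
    and T :: "nat set" and \<gamma> \<alpha> :: real
  assumes A_nonneg: "\<forall>i<m. \<forall>j<n. A i j \<ge> 0"
    and A_rows: "\<forall>i<m. \<exists>j<n. A i j > 0"
    and r_nonneg: "\<forall>i<m. r i \<ge> 0"
    and c_nonneg: "\<forall>j<n. c j \<ge> 0"
    and y_pos: "\<forall>j<n. y j > 0"
    and T_sub: "T \<subseteq> {..<n}"
    and margin: "is_margin m n A r c y T \<gamma>"
    and \<alpha>_pos: "\<alpha> > 0"
    and h_lo: "0 \<le> proxy_h m n A r y T \<alpha> - proxy_h m n A r y T 1"
    and h_hi: "proxy_h m n A r y T \<alpha> - proxy_h m n A r y T 1 \<le> \<gamma>"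
  shows "(\<Sum>j<n. (cAr m n A r y j - c j)^2)
           - (\<Sum>j<n. (cAr m n A r (scaleT T \<alpha> y) j - c j)^2)
         \<ge> 2 * \<gamma> * (proxy_h m n A r y T \<alpha> - proxy_h m n A r y T 1)"
proof -
  let ?y' = "scaleT T \<alpha> y"
  let ?N = "{..<n} - T"
  define \<delta> where "\<delta> = proxy_h m n A r y T \<alpha> - proxy_h m n A r y T 1"
  obtain \<nu> where nu1: "\<forall>j\<in>T. cAr m n A r y j - c j \<le> \<nu> - \<gamma>"
      and nu2: "\<forall>j\<in>?N. \<nu> + \<gamma> \<le> cAr m n A r y j - c j"
    using margin unfolding is_margin_def margin_feasible_def by blast
  have s1: "scaleT T 1 y = y" by (rule ext) (simp add: scaleT_def)
  define d where "d j = cAr m n A r ?y' j - cAr m n A r y j" for j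
  define x where "x j = cAr m n A r y j - c j" for j
  have fT: "finite T" using T_sub finite_subset by blast
  have split: "\<And>f. sum f {..<n} = sum f T + sum f ?N"
    using T_sub by (metis finite_lessThan sum.subset_diff add.commute)
  have sT: "sum d T = \<delta>"
    unfolding d_def \<delta>_def proxy_h_def s1 by (simp add: sum_subtractf)
  have yp': "\<forall>j<n. ?y' j > 0" using y_pos \<alpha>_pos by (simp add: scaleT_def)
  have "sum d {..<n} = 0"
    unfolding d_def sum_subtractf total[OF A_nonneg A_rows yp'] total[OF A_nonneg A_rows y_pos] by simp
  then have sN: "sum d ?N = - \<delta>" using split[of d] sT by simp
  note sg = signs[OF A_nonneg A_rows r_nonneg y_pos \<alpha>_pos]
  have dsign: "(\<forall>j\<in>T. d j \<ge> 0) \<and> (\<forall>j\<in>?N. d j \<le> 0)"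
  proof (cases "\<alpha> \<ge> 1")
    case True
    then show ?thesis using sg[of _ T] T_sub unfolding d_def by auto
  next
    case False
    have a: "\<forall>j\<in>T. - d j \<ge> 0" using sg[of _ T] T_sub False unfolding d_def by auto
    have b: "\<forall>j\<in>?N. d j \<ge> 0" using sg[of _ T] False unfolding d_def by auto
    have "sum (\<lambda>j. - d j) T \<ge> 0" using a by (simp add: sum_nonneg)
    then have "\<delta> = 0" using sT h_lo \<delta>_def by (simp add: sum_negf)
    then have "sum (\<lambda>j. - d j) T = 0" "sum d ?N = 0" using sT sN by (simp_all add: sum_negf)
    then have "\<forall>j\<in>T. - d j = 0" "\<forall>j\<in>?N. d j = 0"
      using sum_nonneg_eq_0_iff[OF fT, of "\<lambda>j. - d j"] a b sum_nonneg_eq_0_iff[of ?N d] by auto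
    then show ?thesis by force
  qed
  have "(\<Sum>j<n. (x j)^2) - (\<Sum>j<n. (x j + d j)^2) \<ge> 2 * \<gamma> * \<delta>"
    by (rule alg[OF T_sub _ _ sT sN]) (use dsign nu1 nu2 h_lo h_hi \<delta>_def x_def in auto)
  moreover have "\<And>j. x j + d j = cAr m n A r ?y' j - c j" unfolding x_def d_def by simp
  ultimately show ?thesis unfolding \<delta>_def x_def by simp
qed

end
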